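(* Let $n$ be an even integer, $Q=P^{\alpha_2}$, $w^{ss}_{\min}\in W^Q$ the element corresponding to $(\frac n2,n)$, and $\xi\in X(w^{ss}_{\min})^{ss}_T(\mathcal{L}(\frac n2\omega_2))$. Let $X_1,\ldots,X_d$ be the standard monomial basis of $H^0(G_{2,n},\mathcal{L}(\frac n2\omega_2))^T$, with $X_1=\prod_{i=1}^{n/2}p_{i,\frac n2+i}$. Then for every $w\in W^{P^{\alpha_{n/2}}}$ with $w\neq \mathrm{id}$ and $w\ne w_0^{S\setminus\{\alpha_{n/2}\}}$ there exists $i\neq1$ with $X_i(w\xi)\neq0$.
   Context: $G=SL(n,\mathbb{C})$, $T$ the diagonal torus, $B$ the upper triangular Borel subgroup, $W=S_n$ acting on $G/Q$ via permutation matrices. $G_{2,n}=G/Q$ is the Grassmannian of 2-planes in $\mathbb{C}^n$, $X(u)=\overline{BuQ}/Q$ for $u\in W^Q\cong I(2,n)$. $p_{a,b}$ ($a<b$) are the Plücker coordinates, sections of $\mathcal{L}(\omega_2)=\mathcal{O}(1)$, with natural $T$-linearization; $ss$ denotes $T$-semistable points. A standard monomial of degree $\frac n2$ is a product $p_{\tau_1}\cdots p_{\tau_{n/2}}$ with $\tau_1\le\cdots\le\tau_{n/2}$ in $I(2,n)$ (componentwise); the $T$-invariant ones form a basis of $H^0(G_{2,n},\mathcal{L}(\frac n2\omega_2))^T$. $W^{P^{\alpha_{n/2}}}=\{v\in S_n:v(1)<\cdots<v(\frac n2),\ v(\frac n2+1)<\cdots<v(n)\}$ and $w_0^{S\setminus\{\alpha_{n/2}\}}$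 is its longest element, $i\mapsto \frac n2+i$, $\frac n2+i\mapsto i$ ($1\le i\le\frac n2$). "$X_i(y)\ne0$" means the section $X_i$ does not vanish at the point $y$. *)

theory Defs
  imports Complex_Main "HOL-Combinatorics.Permutations"
begin

text \<open>A point of the Grassmannian G(2,n) is represented by a pair of vectors (u,v)
  in C^n (indices 1..n) spanning the 2-plane; all conditions below are invariant
  under change of basis of the plane (they only involve non-vanishing of
  homogeneous polynomials in the Pluecker coordinates).\<close>
type_synonym pt = "(nat \<Rightarrow> complex) \<times> (nat \<Rightarrow> complex)"

definition plucker :: "pt \<Rightarrow> nat \<Rightarrow> nat \<Rightarrow> complex" where
  "plucker \<xi> a b = fst \<xi> a * snd \<xi> b - fst \<xi> b * snd \<xi> a"

definition I2 :: "nat \<Rightarrow> (nat \<times> nat) set" where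
  "I2 n = {(a,b). 1 \<le> a \<and> a < b \<and> b \<le> n}"

text \<open>u, v linearly independent: some Pluecker coordinate is nonzero.\<close>
definition is_point :: "nat \<Rightarrow> pt \<Rightarrow> bool" where
  "is_point n \<xi> = (\<exists>(a,b)\<in>I2 n. plucker \<xi> a b \<noteq> 0)"

definition monom_eval :: "pt \<Rightarrow> (nat \<times> nat) list \<Rightarrow> complex" where
  "monom_eval \<xi> ms = prod_list (map (\<lambda>(a,b). plucker \<xi> a b) ms)"

text \<open>Multiplicity of e_i in the T-weight of the monomial (weight of p_{a,b} is e_a+e_b).\<close>
definition weight :: "(nat \<times> nat) list \<Rightarrow> nat \<Rightarrow> nat" where
  "weight ms i = length (filter (\<lambda>(a,b). a = i \<or> b = i) ms)"

text \<open>T-invariance (T the diagonal torus of SL(n)): the weight is a multiple of e_1+...+e_n.\<close>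
definition T_inv :: "nat \<Rightarrow> (nat \<times> nat) list \<Rightarrow> bool" where
  "T_inv n ms = (\<forall>i\<in>{1..n}. \<forall>j\<in>{1..n}. weight ms i = weight ms j)"

text \<open>T-semistable w.r.t. L(n/2 omega_2): some T-invariant section of a positive power
  L(k n/2 omega_2) (a linear combination of T-invariant degree k n/2 monomials in the
  Pluecker coordinates) does not vanish at the point.\<close>
definition semistable :: "nat \<Rightarrow> pt \<Rightarrow> bool" where
  "semistable n \<xi> = (\<exists>k>0. \<exists>S c. finite S \<and>
      (\<forall>ms\<in>S. set ms \<subseteq> I2 n \<and> length ms = k * (n div 2) \<and> T_inv n ms) \<and>
      (\<Sum>ms\<in>S. c ms * monom_eval \<xi> ms) \<noteq> 0)"

definition pair_le :: "nat \<times> nat \<Rightarrow> nat \<times> nat \<Rightarrow> bool" where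
  "pair_le p q = (fst p \<le> fst q \<and> snd p \<le> snd q)"

text \<open>Schubert variety X(u), u = (a,b) in I(2,n): vanishing of all p_tau with tau not <= u.\<close>
definition schubert :: "nat \<Rightarrow> nat \<times> nat \<Rightarrow> pt \<Rightarrow> bool" where
  "schubert n u \<xi> = (is_point n \<xi> \<and> (\<forall>\<tau>\<in>I2 n. \<not> pair_le \<tau> u \<longrightarrow> plucker \<xi> (fst \<tau>) (snd \<tau>) = 0))"

text \<open>Standard T-invariant monomials of degree n/2 (the basis X_1,...,X_d).\<close>
definition std_Tinv_monomials :: "nat \<Rightarrow> (nat \<times> nat) list set" where
  "std_Tinv_monomials n = {ms. set ms \<subseteq> I2 n \<and> length ms = n div 2 \<and>
      sorted_wrt pair_le ms \<and> T_inv n ms}"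

definition X1 :: "nat \<Rightarrow> (nat \<times> nat) list" where
  "X1 n = map (\<lambda>i. (i, n div 2 + i)) [1..<n div 2 + 1]"

text \<open>Action of a permutation w (permutation matrix e_i \<mapsto> e_{w i}) on a point.\<close>
definition perm_act :: "(nat \<Rightarrow> nat) \<Rightarrow> pt \<Rightarrow> pt" where
  "perm_act w \<xi> = (fst \<xi> \<circ> inv w, snd \<xi> \<circ> inv w)"

definition W_P_half :: "nat \<Rightarrow> (nat \<Rightarrow> nat) set" where
  "W_P_half n = {w. w permutes {1..n} \<and> strict_mono_on {1..n div 2} w
                    \<and> strict_mono_on {n div 2 + 1..n} w}"

definition w0_half :: "nat \<Rightarrow> nat \<Rightarrow> nat" where
  "w0_half n i = (if 1 \<le> i \<and> i \<le> n div 2 then n div 2 + i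
                  else if n div 2 < i \<and> i \<le> n then i - n div 2 else i)"

end

theory Submission
  imports Defs
begin

lemma plucker_swap: "plucker x b a = - plucker x a b"
  by (simp add: plucker_def)

lemma plucker_same: "plucker x a a = 0"
  by (simp add: plucker_def)

lemma plucker_rel:
  "plucker x i b * plucker x a d = plucker x i a * plucker x b d + plucker x i d * plucker x a b"
  by (simp add: plucker_def algebra_simps)

lemma plucker_perm: "plucker (perm_act w x) a b = plucker x (inv w a) (inv w b)"
  by (simp add: plucker_def perm_act_def)

lemma weight_Nil: "weight [] j = 0"
  by (simp add: weight_def)

lemma weight_Cons: "weight (p # ms) j = (if fst p = j \<or> snd p = j then 1 else 0) + weight ms j"
  by (cases p) (simp add: weight_def)

lemma ind_low:
  fixes a b m :: nat
  assumes "1 \<le> a" "a < b" "a \<le> m"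
  shows "(\<Sum>j\<in>{1..m}. (if a = j \<or> b = j then 1 else 0) :: nat) = (if b \<le> m then 2 else 1)"
proof -
  have "(\<Sum>j\<in>{1..m}. (if a = j \<or> b = j then 1 else 0) :: nat) = (\<Sum>j\<in>{1..m}. (if j \<in> {a,b} then 1 else 0))"
    by (intro sum.cong) auto
  also have "\<dots> = (\<Sum>j\<in>{1..m} \<inter> {a,b}. 1)"
    by (rule sum.inter_restrict[symmetric]) simp
  also have "\<dots> = card ({1..m} \<inter> {a,b})" by simp
  also have "\<dots> = (if b \<le> m then 2 else 1)"
  proof (cases "b \<le> m")
    case True
    then have "{1..m} \<inter> {a,b} = {a,b}" using assms by auto
    then show ?thesis using True assms by simp
  next
    case False
    then have "{1..m} \<inter> {a,b} = {a}" using assms by auto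
    then show ?thesis using False by simp
  qed
  finally show ?thesis .
qed

lemma ind_high:
  fixes a b m n :: nat
  assumes "a \<le> m" "b \<le> n"
  shows "(\<Sum>j\<in>{m<..n}. (if a = j \<or> b = j then 1 else 0) :: nat) = (if m < b then 1 else 0)"
proof -
  have "(\<Sum>j\<in>{m<..n}. (if a = j \<or> b = j then 1 else 0) :: nat) = (\<Sum>j\<in>{m<..n}. (if j \<in> {a,b} then 1 else 0))"
    by (intro sum.cong) auto
  also have "\<dots> = (\<Sum>j\<in>{m<..n} \<inter> {a,b}. 1)"
    by (rule sum.inter_restrict[symmetric]) simp
  also have "\<dots> = card ({m<..n} \<inter> {a,b})" by simp
  also have "\<dots> = (if m < b then 1 else 0)"
  proof (cases "m < b")
    case True
    then have "{m<..n} \<inter> {a,b} = {b}" using assms by auto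
    then show ?thesis using True by simp
  next
    case False
    then have "{m<..n} \<inter> {a,b} = {}" using assms by auto
    then show ?thesis using False by simp
  qed
  finally show ?thesis .
qed

lemma count_low:
  assumes "\<forall>p\<in>set ms. 1 \<le> fst p \<and> fst p < snd p \<and> fst p \<le> m"
  shows "(\<Sum>j\<in>{1..m}. weight ms j) = length (filter (\<lambda>p. m < snd p) ms) + 2 * length (filter (\<lambda>p. snd p \<le> m) ms)"
  using assms
proof (induction ms)
  case Nil
  then show ?case by (simp add: weight_Nil)
next
  case (Cons p ms)
  have "(\<Sum>j\<in>{1..m}. weight (p # ms) j) = (\<Sum>j\<in>{1..m}. (if fst p = j \<or> snd p = j then 1 else 0)) + (\<Sum>j\<in>{1..m}. weight ms j)"
    by (simp add: weight_Cons sum.distrib)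
  also have "(\<Sum>j\<in>{1..m}. (if fst p = j \<or> snd p = j then 1 else 0)) = (if snd p \<le> m then 2 else (1::nat))"
    using Cons.prems by (intro ind_low) auto
  finally show ?case using Cons by auto
qed

lemma count_high:
  assumes "\<forall>p\<in>set ms. fst p \<le> m \<and> snd p \<le> n"
  shows "(\<Sum>j\<in>{m<..n}. weight ms j) = length (filter (\<lambda>p. m < snd p) ms)"
  using assms
proof (induction ms)
  case Nil
  then show ?case by (simp add: weight_Nil)
next
  case (Cons p ms)
  have "(\<Sum>j\<in>{m<..n}. weight (p # ms) j) = (\<Sum>j\<in>{m<..n}. (if fst p = j \<or> snd p = j then 1 else 0)) + (\<Sum>j\<in>{m<..n}. weight ms j)"
    by (simp add: weight_Cons sum.distrib)
  also have "(\<Sum>j\<in>{m<..n}. (if fst p = j \<or> snd p = j then 1 else 0)) = (if m < snd p then 1 else (0::nat))"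
    using Cons.prems by (intro ind_high) auto
  finally show ?case using Cons by auto
qed

lemma weight_pos:
  assumes "p \<in> set ms" "fst p = j \<or> snd p = j"
  shows "weight ms j \<ge> 1"
proof -
  have "p \<in> set (filter (\<lambda>(a,b). a = j \<or> b = j) ms)"
    using assms by (cases p) auto
  then have "length (filter (\<lambda>(a,b). a = j \<or> b = j) ms) > 0"
    by (rule length_pos_if_in_set)
  then show ?thesis unfolding weight_def by linarith
qed

lemma weight_pos_ex:
  assumes "weight ms j \<ge> 1"
  shows "\<exists>p\<in>set ms. fst p = j \<or> snd p = j"
proof -
  have ne: "filter (\<lambda>(a,b). a = j \<or> b = j) ms \<noteq> []"
    using assms unfolding weight_def by auto
  obtain p where "p \<in> set (filter (\<lambda>(a,b). a = j \<or> b = j) ms)"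
    using hd_in_set[OF ne] by blast
  then show ?thesis by (auto simp: case_prod_beta)
qed

lemma key_nonzero:
  assumes ev: "even n"
    and sch: "schubert n (n div 2, n) \<xi>"
    and ss: "semistable n \<xi>"
    and i: "1 \<le> i" "i \<le> n div 2"
  shows "plucker \<xi> i (n div 2 + i) \<noteq> 0"
proof -
  define m where "m = n div 2"
  have n2: "n = 2 * m" using ev m_def by auto
  have im: "1 \<le> i" "i \<le> m" using i m_def by auto
  have van: "\<And>a b. (a,b) \<in> I2 n \<Longrightarrow> \<not> pair_le (a,b) (m,n) \<Longrightarrow> plucker \<xi> a b = 0"
    using sch unfolding schubert_def m_def by auto
  have zero_high: "plucker \<xi> b d = 0" if "m < b" "m < d" "b \<le> n" "d \<le> n" for b d
  proof (cases b d rule: linorder_cases)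
    case less
    then show ?thesis using that van[of b d] by (auto simp: I2_def pair_le_def)
  next
    case equal
    then show ?thesis by (simp add: plucker_same)
  next
    case greater
    then have "plucker \<xi> d b = 0" using that van[of d b] by (auto simp: I2_def pair_le_def)
    then show ?thesis by (simp add: plucker_swap[of \<xi> b d])
  qed
  have low: "a \<le> m" if "(a,b) \<in> I2 n" "plucker \<xi> a b \<noteq> 0" for a b
    using van[OF that(1)] that(2) by (auto simp: pair_le_def I2_def)
  obtain k S c where k: "k > 0" and fin: "finite S"
    and Sprop: "\<forall>ms\<in>S. set ms \<subseteq> I2 n \<and> length ms = k * m \<and> T_inv n ms"
    and sum: "(\<Sum>ms\<in>S. c ms * monom_eval \<xi> ms) \<noteq> 0"
    using ss unfolding semistable_def m_def by blast
  obtain ms where msS: "ms \<in> S" and "c ms * monom_eval \<xi> ms \<noteq> 0"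
    using sum.not_neutral_contains_not_neutral[OF sum] by blast
  then have mev: "monom_eval \<xi> ms \<noteq> 0" by auto
  have msI: "set ms \<subseteq> I2 n" and len: "length ms = k * m" and Tv: "T_inv n ms"
    using Sprop msS by auto
  have nz: "plucker \<xi> (fst p) (snd p) \<noteq> 0" if "p \<in> set ms" for p
  proof
    assume "plucker \<xi> (fst p) (snd p) = 0"
    then have "0 \<in> set (map (\<lambda>(a,b). plucker \<xi> a b) ms)"
      using that by (cases p) force
    then show False using mev unfolding monom_eval_def by (simp add: prod_list_zero_iff)
  qed
  have pr: "1 \<le> fst p \<and> fst p < snd p \<and> fst p \<le> m \<and> snd p \<le> n" if "p \<in> set ms" for p
  proof -
    have "p \<in> I2 n" using msI that by auto
    moreover have "fst p \<le> m" using low[of "fst p" "snd p"] nz[OF that] \<open>p \<in> I2 n\<close> by auto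
    ultimately show ?thesis by (auto simp: I2_def)
  qed
  have "ms \<noteq> []" using len k im by auto
  then obtain p0 where p0: "p0 \<in> set ms" using hd_in_set by blast
  define t where "t = weight ms (fst p0)"
  have t1: "t \<ge> 1" unfolding t_def using weight_pos[OF p0] by auto
  have p0n: "fst p0 \<in> {1..n}" using pr[OF p0] by auto
  have wt: "weight ms j = t" if "j \<in> {1..n}" for j
    using Tv that p0n unfolding T_inv_def t_def by blast
  have "(\<Sum>j\<in>{1..m}. weight ms j) = (\<Sum>j\<in>{1..m}. t)"
    using wt n2 by (intro sum.cong) auto
  then have s1: "(\<Sum>j\<in>{1..m}. weight ms j) = m * t" by simp
  have "(\<Sum>j\<in>{m<..n}. weight ms j) = (\<Sum>j\<in>{m<..n}. t)"
    using wt n2 by (intro sum.cong) auto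
  then have s2: "(\<Sum>j\<in>{m<..n}. weight ms j) = m * t" using n2 by simp
  have cl: "(\<Sum>j\<in>{1..m}. weight ms j) = length (filter (\<lambda>p. m < snd p) ms) + 2 * length (filter (\<lambda>p. snd p \<le> m) ms)"
    by (rule count_low) (use pr in blast)
  have ch: "(\<Sum>j\<in>{m<..n}. weight ms j) = length (filter (\<lambda>p. m < snd p) ms)"
    by (rule count_high) (use pr in blast)
  have "length (filter (\<lambda>p. snd p \<le> m) ms) = 0"
    using cl ch s1 s2 by linarith
  then have "filter (\<lambda>p. snd p \<le> m) ms = []" by simp
  then have allhigh: "\<forall>p\<in>set ms. m < snd p"
    unfolding filter_empty_conv by (simp add: not_le)
  obtain p where p: "p \<in> set ms" "fst p = i \<or> snd p = i"
    using weight_pos_ex[of ms i] wt[of i] t1 im n2 by auto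
  then have pi: "fst p = i" using allhigh im by auto
  obtain q where q: "q \<in> set ms" "fst q = m + i \<or> snd q = m + i"
    using weight_pos_ex[of ms "m+i"] wt[of "m+i"] t1 im n2 by auto
  then have qi: "snd q = m + i" using pr[OF q(1)] im by auto
  have "plucker \<xi> i (snd p) * plucker \<xi> (fst q) (m+i)
      = plucker \<xi> i (fst q) * plucker \<xi> (snd p) (m+i) + plucker \<xi> i (m+i) * plucker \<xi> (fst q) (snd p)"
    by (rule plucker_rel)
  moreover have "plucker \<xi> (snd p) (m+i) = 0"
  proof -
    have a1: "m < snd p" using allhigh p(1) by blast
    have a2: "snd p \<le> n" using pr[OF p(1)] by blast
    have a3: "m < m + i" using im by simp
    have a4: "m + i \<le> n" using im n2 by simp
    show ?thesis by (rule zero_high[OF a1 a3 a2 a4])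
  qed
  moreover have "plucker \<xi> i (snd p) * plucker \<xi> (fst q) (m+i) \<noteq> 0"
    using nz[OF p(1)] nz[OF q(1)] unfolding pi qi by simp
  ultimately have "plucker \<xi> i (m+i) \<noteq> 0" by (metis add_0 mult_zero_left mult_zero_right)
  then show ?thesis using m_def by simp
qed


theorem lemma7p8:
  fixes n :: nat and \<xi> :: pt and w :: "nat \<Rightarrow> nat"
  assumes "even n"
    and "schubert n (n div 2, n) \<xi>"
    and "semistable n \<xi>"
    and "w \<in> W_P_half n"
    and "w \<noteq> id"
    and "w \<noteq> w0_half n"
  shows "\<exists>X\<in>std_Tinv_monomials n. X \<noteq> X1 n \<and> monom_eval (perm_act w \<xi>) X \<noteq> 0"
proof -
  define m where "m = n div 2"
  have n2: "n = 2 * m" using assms(1) m_def by auto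
  have perm: "w permutes {1..n}" and mono1: "strict_mono_on {1..m} w"
    and mono2: "strict_mono_on {m+1..n} w"
    using assms(4) unfolding W_P_half_def m_def by auto
  have inj: "inj w" using perm by (rule permutes_inj)
  have inS: "w x \<in> {1..n} \<longleftrightarrow> x \<in> {1..n}" for x using perm by (rule permutes_in_image)
  have outS: "x \<notin> {1..n} \<Longrightarrow> w x = x" for x using perm by (rule permutes_not_in)
  have invw: "inv w (w x) = x" for x using perm by (rule permutes_inverses(2))
  have P: "plucker \<xi> i (m + i) \<noteq> 0" if "1 \<le> i" "i \<le> m" for i
    using key_nonzero[OF assms(1-3)] that m_def by simp
  define f where "f i = (min (w i) (w (m+i)), max (w i) (w (m+i)))" for i
  define X where "X = map f [1..<m+1]"
  have wi: "w i \<in> {1..n}" "w (m+i) \<in> {1..n}" "w i \<noteq> w (m+i)" if "1 \<le> i" "i \<le> m" for i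
  proof -
    show "w i \<in> {1..n}" using inS[of i] that n2 by simp
    show "w (m+i) \<in> {1..n}" using inS[of "m+i"] that n2 by simp
    show "w i \<noteq> w (m+i)"
    proof
      assume "w i = w (m+i)"
      then have "i = m + i" by (rule injD[OF inj])
      then show False using that by simp
    qed
  qed
  have mono1': "w i < w j" if "1 \<le> i" "i < j" "j \<le> m" for i j
    using strict_mono_onD[OF mono1, of i j] that by auto
  have mono2': "w (m+i) < w (m+j)" if "1 \<le> i" "i < j" "j \<le> m" for i j
    using strict_mono_onD[OF mono2, of "m+i" "m+j"] that n2 by auto
  have setX: "set X \<subseteq> I2 n"
  proof
    fix p assume "p \<in> set X"
    then obtain i where i: "1 \<le> i" "i \<le> m" and p: "p = f i" unfolding X_def by auto
    show "p \<in> I2 n" using wi[OF i] unfolding p f_def I2_def by auto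
  qed
  have lenX: "length X = n div 2" unfolding X_def m_def by simp
  have sortX: "sorted_wrt pair_le X"
    unfolding X_def sorted_wrt_map
  proof (rule sorted_wrt_mono_rel[OF _ sorted_wrt_upt])
    fix i j assume "i \<in> set [1..<m+1]" "j \<in> set [1..<m+1]" "i < j"
    then have ij: "1 \<le> i" "i < j" "j \<le> m" by auto
    show "pair_le (f i) (f j)"
      using mono1'[OF ij] mono2'[OF ij] unfolding f_def pair_le_def by auto
  qed
  have wX: "weight X j = 1" if j: "j \<in> {1..n}" for j
  proof -
    have st: "set [1..<m+1] = {1..m}" by auto
    have "weight X j = length (filter ((\<lambda>(a,b). a = j \<or> b = j) \<circ> f) [1..<m+1])"
      unfolding weight_def X_def filter_map by simp
    also have "filter ((\<lambda>(a,b). a = j \<or> b = j) \<circ> f) [1..<m+1]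
             = filter (\<lambda>i. w i = j \<or> w (m+i) = j) [1..<m+1]"
      by (rule filter_cong) (auto simp: f_def min_def max_def)
    also have "length \<dots> = card ({i. w i = j \<or> w (m+i) = j} \<inter> {1..m})"
      using st by (simp only: distinct_length_filter[OF distinct_upt])
    also have "{i. w i = j \<or> w (m+i) = j} \<inter> {1..m} = {if inv w j \<le> m then inv w j else inv w j - m}"
    proof -
      define k where "k = inv w j"
      have wk: "w k = j" unfolding k_def using perm by (rule permutes_inverses(1))
      have k: "k \<in> {1..n}" using inS[of k] wk j by simp
      show ?thesis
        unfolding k_def[symmetric]
      proof (intro equalityI subsetI)
        fix i assume "i \<in> {i. w i = j \<or> w (m+i) = j} \<inter> {1..m}"
        then have A: "w i = w k \<or> w (m+i) = w k" "1 \<le> i" "i \<le> m"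
          using wk by auto
        then have "(i = k \<or> m + i = k)" using injD[OF inj] by blast
        then show "i \<in> {if k \<le> m then k else k - m}" using A by auto
      next
        fix i assume "i \<in> {if k \<le> m then k else k - m}"
        then show "i \<in> {i. w i = j \<or> w (m+i) = j} \<inter> {1..m}"
          using wk k n2 by (cases "k \<le> m") auto
      qed
    qed
    finally show ?thesis by simp
  qed
  have TX: "T_inv n X" unfolding T_inv_def using wX by simp
  have Xstd: "X \<in> std_Tinv_monomials n"
    unfolding std_Tinv_monomials_def using setX lenX sortX TX by simp
  have factor: "plucker (perm_act w \<xi>) (fst (f i)) (snd (f i)) \<noteq> 0" if "1 \<le> i" "i \<le> m" for i
  proof (cases "w i < w (m+i)")
    case True
    then show ?thesis using P[OF that] unfolding f_def plucker_perm by (simp add: invw)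
  next
    case False
    then have "w (m+i) < w i" using wi[OF that] by auto
    then show ?thesis using P[OF that] unfolding f_def plucker_perm
      by (simp add: invw plucker_swap[of \<xi> "m+i" i])
  qed
  have mev: "monom_eval (perm_act w \<xi>) X \<noteq> 0"
  proof
    assume "monom_eval (perm_act w \<xi>) X = 0"
    then have "0 \<in> set (map (\<lambda>(a,b). plucker (perm_act w \<xi>) a b) X)"
      unfolding monom_eval_def by (simp add: prod_list_zero_iff)
    then obtain i where i: "1 \<le> i" "i \<le> m"
      and "plucker (perm_act w \<xi>) (fst (f i)) (snd (f i)) = 0"
      unfolding X_def by (auto simp: case_prod_beta)
    then show False using factor by blast
  qed
  have XX1: "X \<noteq> X1 n"
  proof
    assume "X = X1 n"
    then have "map f [1..<m+1] = map (\<lambda>i. (i, m + i)) [1..<m+1]"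
      unfolding X_def X1_def m_def by simp
    then have fa: "\<forall>x\<in>set [1..<m+1]. f x = (x, m+x)" by (simp only: map_eq_conv)
    have fe: "f i = (i, m+i)" if "1 \<le> i" "i \<le> m" for i
    proof -
      have "i \<in> set [1..<m+1]" using that by auto
      then show ?thesis using fa by blast
    qed
    have E: "(w i = i \<and> w (m+i) = m+i) \<or> (w i = m+i \<and> w (m+i) = i)" if "1 \<le> i" "i \<le> m" for i
      using fe[OF that] unfolding f_def by (auto simp: min_def max_def split: if_splits)
    show False
    proof (cases "\<exists>i0. 1 \<le> i0 \<and> i0 \<le> m \<and> w i0 = m + i0")
      case True
      then obtain i0 where i0: "1 \<le> i0" "i0 \<le> m" "w i0 = m + i0" by blast
      have sw: "w i = m+i \<and> w (m+i) = i" if "1 \<le> i" "i \<le> m" for i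
      proof (cases i i0 rule: linorder_cases)
        case less
        have "w (m+i) < w (m+i0)" using mono2'[OF that(1) less i0(2)] .
        moreover have "w (m+i0) = i0" using E[OF i0(1,2)] i0(3) by auto
        ultimately show ?thesis using E[OF that] that i0 by auto
      next
        case equal
        then show ?thesis using E[OF that] i0 by auto
      next
        case greater
        have "w i0 < w i" using mono1'[OF i0(1) greater that(2)] .
        then show ?thesis using E[OF that] that i0 by auto
      qed
      have "w = w0_half n"
      proof
        fix x
        show "w x = w0_half n x"
        proof (cases "1 \<le> x \<and> x \<le> m")
          case True
          then show ?thesis using sw[of x] unfolding w0_half_def m_def[symmetric] by auto
        next
          case F1: False
          show ?thesis
          proof (cases "m < x \<and> x \<le> n")
            case True
            then have "w (m + (x - m)) = x - m" using sw[of "x-m"] n2 by auto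
            then show ?thesis using True F1 unfolding w0_half_def m_def[symmetric] by auto
          next
            case False
            then have "x \<notin> {1..n}" using F1 by auto
            then show ?thesis using outS F1 False unfolding w0_half_def m_def[symmetric] by auto
          qed
        qed
      qed
      then show False using assms(6) by simp
    next
      case False
      then have sw: "w i = i \<and> w (m+i) = m+i" if "1 \<le> i" "i \<le> m" for i
        using E[OF that] that by auto
      have "w = id"
      proof
        fix x
        show "w x = id x"
        proof (cases "1 \<le> x \<and> x \<le> m")
          case True
          then show ?thesis using sw[of x] by auto
        next
          case F1: False
          show ?thesis
          proof (cases "m < x \<and> x \<le> n")
            case True
            then have "w (m + (x - m)) = m + (x - m)" using sw[of "x-m"] n2 by auto
            then show ?thesis using True by auto
          next
            case False
            then have "x \<notin> {1..n}" using F1 by auto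
            then show ?thesis using outS by auto
          qed
        qed
      qed
      then show False using assms(5) by simp
    qed
  qed
  show ?thesis using Xstd XX1 mev by blast
qed

end
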